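(* Let $r,\kappa,\eta>0$, $L\ge 0$, $S>L$, $V>0$, and let $m_1,m_2\ge 3$ be integers. Set $\Delta s=(S-L)/(m_1+1)$, $\Delta v=V/(m_2+1)$, $s_i=L+i\Delta s$ ($1\le i\le m_1$), $v_j=j\Delta v$ ($1\le j\le m_2$), $D_1=\mathrm{diag}(s_1,\dots,s_{m_1})$, $D_2=\mathrm{diag}(v_1,\dots,v_{m_2})$, $L_1=\frac{1}{2\Delta s}\,\mathrm{tridiag}(-1,0,1)$ (an $m_1\times m_1$ matrix) and $L_2=\frac{1}{2\Delta v}\,\mathrm{tridiag}(-1,0,1)$ (an $m_2\times m_2$ matrix). Define the real $m_1m_2\times m_1m_2$ matrices \[ A_1=r\,I\otimes(D_1L_1),\qquad A_2=\kappa\,[(\eta I-D_2)L_2]\otimes I . \] Then for all $t\ge 0$, \[ \|e^{tA_1}\|_2\le e^{t r/2}\quad\text{and}\quad \|e^{tA_2}\|_2\le e^{t\kappa/2}. \] Moreover, the values $\omega=r/2$ and $\omega=\kappa/2$ are the smallest values of $\omega$ for which the respective bounds $\|e^{tA_1}\|_2\le e^{t\omega}$, $\|e^{tA_2}\|_2\le e^{t\omega}$ (for all $t\ge0$) hold uniformly in the mesh widths, i.e. for all admissible $m_1,m_2$.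
   Context: $\otimes$ denotes the Kronecker product, $I$ the identity matrix of the appropriate dimension, and $\|\cdot\|_2$ the spectral norm (matrix norm induced by the Euclidean norm). $\mathrm{tridiag}(a,b,c)$ denotes the tridiagonal matrix with constant subdiagonal $a$, diagonal $b$ and superdiagonal $c$. *)

theory Defs
  imports Complex_Main "Jordan_Normal_Form.Matrix"
begin

text \<open>Real matrices are JNF matrices (explicit dimensions). Indices are 0-based.\<close>

definition tridiag :: "nat \<Rightarrow> real \<Rightarrow> real \<Rightarrow> real \<Rightarrow> real mat" where
  "tridiag m a b c = mat m m (\<lambda>(i,j). if i = j + 1 then a else if i = j then b
                                      else if j = i + 1 then c else 0)"

definition kron :: "real mat \<Rightarrow> real mat \<Rightarrow> real mat" where
  "kron A B = mat (dim_row A * dim_row B) (dim_col A * dim_col B)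
     (\<lambda>(i,j). A $$ (i div dim_row B, j div dim_col B) * B $$ (i mod dim_row B, j mod dim_col B))"

definition mat_exp :: "real mat \<Rightarrow> real mat" where
  "mat_exp A = mat (dim_row A) (dim_col A) (\<lambda>(i,j). \<Sum>k. (A ^\<^sub>m k) $$ (i,j) / fact k)"

definition vnorm2 :: "real vec \<Rightarrow> real" where
  "vnorm2 x = sqrt (\<Sum>i<dim_vec x. (x $ i)\<^sup>2)"

definition spec_norm :: "real mat \<Rightarrow> real" where
  "spec_norm A = Sup {vnorm2 (A *\<^sub>v x) | x. x \<in> carrier_vec (dim_col A) \<and> vnorm2 x = 1}"

definition A1_mat :: "real \<Rightarrow> real \<Rightarrow> real \<Rightarrow> nat \<Rightarrow> nat \<Rightarrow> real mat" where
  "A1_mat r L S m1 m2 =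
     (let ds = (S - L) / real (m1 + 1);
          D1 = mat_diag m1 (\<lambda>i. L + real (i + 1) * ds);
          L1 = (1 / (2 * ds)) \<cdot>\<^sub>m tridiag m1 (-1) 0 1
      in r \<cdot>\<^sub>m kron (1\<^sub>m m2) (D1 * L1))"

definition A2_mat :: "real \<Rightarrow> real \<Rightarrow> real \<Rightarrow> nat \<Rightarrow> nat \<Rightarrow> real mat" where
  "A2_mat \<kappa> \<eta> V m1 m2 =
     (let dv = V / real (m2 + 1);
          D2 = mat_diag m2 (\<lambda>j. real (j + 1) * dv);
          L2 = (1 / (2 * dv)) \<cdot>\<^sub>m tridiag m2 (-1) 0 1
      in \<kappa> \<cdot>\<^sub>m kron ((\<eta> \<cdot>\<^sub>m 1\<^sub>m m2 - D2) * L2) (1\<^sub>m m1))"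

end

theory Submission
  imports Defs
begin


definition ent :: "real mat \<Rightarrow> nat \<Rightarrow> nat \<Rightarrow> real \<Rightarrow> real" where
  "ent A i j t = (\<Sum>k. ((A ^\<^sub>m k) $$ (i,j) / fact k) * t ^ k)"

lemma pow_mat_Suc_left: "A \<in> carrier_mat n n \<Longrightarrow> A ^\<^sub>m Suc k = A * A ^\<^sub>m k"
proof (induction k)
  case 0 then show ?case by simp
next
  case (Suc k)
  have "A ^\<^sub>m Suc (Suc k) = A ^\<^sub>m Suc k * A" by simp
  also have "\<dots> = (A * A^\<^sub>m k) * A" using Suc by simp
  also have "\<dots> = A * (A^\<^sub>m k * A)" using Suc.prems by (simp add: assoc_mult_mat[of _ n n _ n _ n])
  finally show ?case by simp
qed

lemma pow_smult_entry: fixes A :: "real mat" assumes "A \<in> carrier_mat n n" "i < n" "j < n"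
  shows "((t \<cdot>\<^sub>m A) ^\<^sub>m k) $$ (i,j) = t^k * (A ^\<^sub>m k) $$ (i,j)"
  using assms(2,3)
proof (induction k arbitrary: i j)
  case 0 then show ?case using assms by simp
next
  case (Suc k)
  have "((t \<cdot>\<^sub>m A) ^\<^sub>m Suc k) $$ (i,j) = (\<Sum>l<n. ((t \<cdot>\<^sub>m A) ^\<^sub>m k) $$ (i,l) * (t * A $$ (l,j)))"
    using Suc.prems assms by (simp add: index_mult_mat scalar_prod_def atLeast0LessThan)
  also have "\<dots> = (\<Sum>l<n. t^k * (A ^\<^sub>m k) $$ (i,l) * (t * A $$ (l,j)))"
    using Suc by simp
  also have "\<dots> = t^Suc k * (\<Sum>l<n. (A ^\<^sub>m k) $$ (i,l) * A $$ (l,j))"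
    unfolding sum_distrib_left by (intro sum.cong refl) (simp add: algebra_simps)
  also have "\<dots> = t^Suc k * (A ^\<^sub>m Suc k) $$ (i,j)"
    using Suc.prems assms by (simp add: index_mult_mat scalar_prod_def atLeast0LessThan)
  finally show ?case .
qed

definition mnorm :: "real mat \<Rightarrow> nat \<Rightarrow> real" where
  "mnorm A n = (\<Sum>i<n. \<Sum>j<n. \<bar>A $$ (i,j)\<bar>)"

lemma mnorm_nonneg: "mnorm A n \<ge> 0" unfolding mnorm_def by (intro sum_nonneg) auto

lemma col_le_mnorm: "j < n \<Longrightarrow> (\<Sum>l<n. \<bar>A $$ (l,j)\<bar>) \<le> mnorm A n"
proof -
  assume j: "j < n"
  have "(\<Sum>l<n. \<bar>A $$ (l,j)\<bar>) \<le> (\<Sum>l<n. \<Sum>j'<n. \<bar>A $$ (l,j')\<bar>)"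
    by (intro sum_mono member_le_sum) (use j in auto)
  then show ?thesis unfolding mnorm_def .
qed

lemma pow_entry_bound: fixes A :: "real mat" assumes "A \<in> carrier_mat n n" "i < n" "j < n"
  shows "\<bar>(A ^\<^sub>m k) $$ (i,j)\<bar> \<le> mnorm A n ^ k"
  using assms(2,3)
proof (induction k arbitrary: i j)
  case 0 then show ?case using assms by simp
next
  case (Suc k)
  have "\<bar>(A ^\<^sub>m Suc k) $$ (i,j)\<bar> = \<bar>\<Sum>l<n. (A ^\<^sub>m k) $$ (i,l) * A $$ (l,j)\<bar>"
    using Suc.prems assms by (simp add: index_mult_mat scalar_prod_def atLeast0LessThan)
  also have "\<dots> \<le> (\<Sum>l<n. \<bar>(A ^\<^sub>m k) $$ (i,l)\<bar> * \<bar>A $$ (l,j)\<bar>)"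
    by (rule order_trans[OF sum_abs]) (simp add: abs_mult)
  also have "\<dots> \<le> (\<Sum>l<n. mnorm A n ^ k * \<bar>A $$ (l,j)\<bar>)"
    by (intro sum_mono mult_right_mono Suc.IH) (use Suc.prems in auto)
  also have "\<dots> = mnorm A n ^ k * (\<Sum>l<n. \<bar>A $$ (l,j)\<bar>)" by (simp add: sum_distrib_left)
  also have "\<dots> \<le> mnorm A n ^ k * mnorm A n"
    by (intro mult_left_mono col_le_mnorm) (use Suc.prems mnorm_nonneg in auto)
  finally show ?case by (simp add: mult.commute)
qed

lemma ent_summable: fixes A :: "real mat" assumes "A \<in> carrier_mat n n" "i < n" "j < n"
  shows "summable (\<lambda>k. ((A ^\<^sub>m k) $$ (i,j) / fact k) * y ^ k)"
proof -
  have b: "norm ((A ^\<^sub>m k) $$ (i,j) / fact k * y ^ k) \<le> inverse (fact k) * (mnorm A n * \<bar>y\<bar>) ^ k" for k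
  proof -
    have "norm ((A ^\<^sub>m k) $$ (i,j) / fact k * y ^ k) = \<bar>(A ^\<^sub>m k) $$ (i,j)\<bar> * \<bar>y\<bar>^k / fact k"
      by (simp add: abs_mult power_abs)
    also have "\<dots> \<le> mnorm A n ^ k * \<bar>y\<bar>^k / fact k"
      by (intro divide_right_mono mult_right_mono pow_entry_bound assms) auto
    finally show ?thesis by (simp add: power_mult_distrib field_simps)
  qed
  show ?thesis by (rule summable_comparison_test'[OF summable_exp[of "mnorm A n * \<bar>y\<bar>"] b])
qed

lemma ent_deriv: assumes A: "A \<in> carrier_mat n n" and ij: "i < n" "j < n"
  shows "(ent A i j has_real_derivative (\<Sum>l<n. A $$ (i,l) * ent A l j t)) (at t)"
proof -
  define c where "c = (\<lambda>k. (A ^\<^sub>m k) $$ (i,j) / fact k)"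
  have "((\<lambda>x. \<Sum>k. c k * x^k) has_field_derivative (\<Sum>k. diffs c k * t^k)) (at t)"
    by (rule termdiffs_strong_converges_everywhere) (use ent_summable[OF A ij] c_def in auto)
  moreover have "(\<lambda>x. \<Sum>k. c k * x^k) = ent A i j" unfolding c_def ent_def by auto
  moreover have "(\<Sum>k. diffs c k * t^k) = (\<Sum>l<n. A $$ (i,l) * ent A l j t)"
  proof -
    have d: "diffs c k * t^k = (\<Sum>l<n. A $$ (i,l) * ((A ^\<^sub>m k) $$ (l,j) / fact k * t^k))" for k
    proof -
      have "diffs c k = (A ^\<^sub>m Suc k) $$ (i,j) / fact k"
      proof -
        have "diffs c k = real (Suc k) * ((A ^\<^sub>m Suc k) $$ (i,j) / (real (Suc k) * fact k))"
          unfolding diffs_def c_def fact_Suc by simp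
        also have "\<dots> = (A ^\<^sub>m Suc k) $$ (i,j) / fact k"
          by (simp only: divide_divide_eq_left[symmetric]) (simp del: of_nat_Suc)
        finally show ?thesis .
      qed
      also have "(A ^\<^sub>m Suc k) $$ (i,j) = (\<Sum>l<n. A $$ (i,l) * (A ^\<^sub>m k) $$ (l,j))"
        using A ij by (subst pow_mat_Suc_left[OF A]) (simp add: index_mult_mat scalar_prod_def atLeast0LessThan)
      finally show ?thesis by (simp add: sum_distrib_right sum_divide_distrib mult.assoc)
    qed
    have "(\<Sum>k. diffs c k * t^k) = (\<Sum>k. \<Sum>l<n. A $$ (i,l) * ((A ^\<^sub>m k) $$ (l,j) / fact k * t^k))"
      using d by simp
    also have "\<dots> = (\<Sum>l<n. \<Sum>k. A $$ (i,l) * ((A ^\<^sub>m k) $$ (l,j) / fact k * t^k))"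
      by (rule suminf_sum) (intro summable_mult ent_summable[OF A], use ij in auto)
    also have "\<dots> = (\<Sum>l<n. A $$ (i,l) * ent A l j t)"
    proof (rule sum.cong[OF refl])
      fix l assume l: "l \<in> {..<n}"
      show "(\<Sum>k. A $$ (i,l) * ((A ^\<^sub>m k) $$ (l,j) / fact k * t^k)) = A $$ (i,l) * ent A l j t"
        unfolding ent_def by (rule suminf_mult[OF ent_summable[OF A]]) (use ij l in auto)
    qed
    finally show ?thesis .
  qed
  ultimately show ?thesis by simp
qed

lemma ent_zero: "A \<in> carrier_mat n n \<Longrightarrow> i < n \<Longrightarrow> j < n \<Longrightarrow> ent A i j 0 = (if i = j then 1 else 0)"
  unfolding ent_def by (subst powser_zero) simp

definition quad :: "real mat \<Rightarrow> nat \<Rightarrow> (nat \<Rightarrow> real) \<Rightarrow> real" where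
  "quad A n x = (\<Sum>i<n. \<Sum>j<n. x i * A $$ (i,j) * x j)"

definition yv :: "real mat \<Rightarrow> nat \<Rightarrow> (nat \<Rightarrow> real) \<Rightarrow> nat \<Rightarrow> real \<Rightarrow> real" where
  "yv A n x i t = (\<Sum>j<n. ent A i j t * x j)"

definition fsq :: "real mat \<Rightarrow> nat \<Rightarrow> (nat \<Rightarrow> real) \<Rightarrow> real \<Rightarrow> real" where
  "fsq A n x t = (\<Sum>i<n. (yv A n x i t)^2)"

lemma yv_deriv: assumes A: "A \<in> carrier_mat n n" and i: "i < n"
  shows "((\<lambda>t. yv A n x i t) has_real_derivative (\<Sum>l<n. A $$ (i,l) * yv A n x l t)) (at t)"
proof -
  have "((\<lambda>t. yv A n x i t) has_real_derivative (\<Sum>j<n. (\<Sum>l<n. A $$ (i,l) * ent A l j t) * x j)) (at t)"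
    unfolding yv_def
    by (intro DERIV_sum DERIV_cmult_right ent_deriv[OF A i]) auto
  also have "(\<Sum>j<n. (\<Sum>l<n. A $$ (i,l) * ent A l j t) * x j) = (\<Sum>l<n. A $$ (i,l) * yv A n x l t)"
    unfolding yv_def sum_distrib_left sum_distrib_right
    by (subst sum.swap) (simp add: mult.assoc)
  finally show ?thesis .
qed

lemma fsq_deriv: assumes A: "A \<in> carrier_mat n n"
  shows "(fsq A n x has_real_derivative 2 * quad A n (\<lambda>i. yv A n x i t)) (at t)"
proof -
  have "(fsq A n x has_real_derivative (\<Sum>i<n. 2 * yv A n x i t * (\<Sum>l<n. A $$ (i,l) * yv A n x l t))) (at t)"
    unfolding fsq_def[abs_def]
    by (intro DERIV_sum) (auto intro!: derivative_eq_intros yv_deriv[OF A])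
  also have "(\<Sum>i<n. 2 * yv A n x i t * (\<Sum>l<n. A $$ (i,l) * yv A n x l t)) = 2 * quad A n (\<lambda>i. yv A n x i t)"
    unfolding quad_def sum_distrib_left by (simp add: mult.assoc)
  finally show ?thesis .
qed

lemma yv_zero: assumes A: "A \<in> carrier_mat n n" and i: "i < n" shows "yv A n x i 0 = x i"
proof -
  have "yv A n x i 0 = (\<Sum>j<n. (if i = j then x j else 0))"
    unfolding yv_def by (intro sum.cong refl) (use A i in \<open>auto simp: ent_zero\<close>)
  also have "\<dots> = x i" using i by (simp add: sum.delta)
  finally show ?thesis .
qed

lemma fsq_zero: "A \<in> carrier_mat n n \<Longrightarrow> fsq A n x 0 = (\<Sum>i<n. (x i)^2)"
  unfolding fsq_def by (simp add: yv_zero)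

lemma mat_exp_entry: assumes A: "A \<in> carrier_mat n n" and "i < n" "j < n"
  shows "mat_exp (t \<cdot>\<^sub>m A) $$ (i,j) = ent A i j t"
  using assms unfolding mat_exp_def ent_def
  by (simp add: pow_smult_entry[OF A] mult.commute)

lemma mat_exp_carrier: "A \<in> carrier_mat n n \<Longrightarrow> mat_exp (t \<cdot>\<^sub>m A) \<in> carrier_mat n n"
  unfolding mat_exp_def carrier_mat_def by simp

lemma mat_exp_mult_vec: assumes A: "A \<in> carrier_mat n n" and x: "x \<in> carrier_vec n"
  shows "vnorm2 (mat_exp (t \<cdot>\<^sub>m A) *\<^sub>v x) = sqrt (fsq A n (\<lambda>j. x $ j) t)"
proof -
  have C: "mat_exp (t \<cdot>\<^sub>m A) \<in> carrier_mat n n" by (rule mat_exp_carrier[OF A])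
  have "(mat_exp (t \<cdot>\<^sub>m A) *\<^sub>v x) $ i = yv A n (\<lambda>j. x $ j) i t" if i: "i < n" for i
  proof -
    have "(mat_exp (t \<cdot>\<^sub>m A) *\<^sub>v x) $ i = (\<Sum>j<n. mat_exp (t \<cdot>\<^sub>m A) $$ (i,j) * x $ j)"
      using C x i by (simp add: scalar_prod_def atLeast0LessThan)
    also have "\<dots> = yv A n (\<lambda>j. x $ j) i t"
      unfolding yv_def by (intro sum.cong refl) (use A i in \<open>simp add: mat_exp_entry\<close>)
    finally show ?thesis .
  qed
  moreover have "dim_vec (mat_exp (t \<cdot>\<^sub>m A) *\<^sub>v x) = n" using C by simp
  ultimately show ?thesis unfolding vnorm2_def fsq_def by simp
qed

lemma fsq_bound: assumes A: "A \<in> carrier_mat n n"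
  and Q: "\<And>x. quad A n x \<le> \<omega> * (\<Sum>i<n. (x i)^2)" and t: "t \<ge> 0"
  shows "fsq A n x t \<le> exp (2 * \<omega> * t) * (\<Sum>i<n. (x i)^2)"
proof -
  define g where "g s = exp (- (2 * \<omega> * s)) * fsq A n x s" for s
  have "g t \<le> g 0"
  proof (rule DERIV_nonpos_imp_nonincreasing[OF t])
    fix s :: real
    have d: "(g has_real_derivative
        (exp (- (2 * \<omega> * s)) * (- (2 * \<omega>)) * fsq A n x s + exp (- (2 * \<omega> * s)) * (2 * quad A n (\<lambda>i. yv A n x i s)))) (at s)"
      unfolding g_def[abs_def]
      by (rule derivative_eq_intros fsq_deriv[OF A] refl | simp)+
    have "quad A n (\<lambda>i. yv A n x i s) \<le> \<omega> * fsq A n x s"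
      using Q[of "\<lambda>i. yv A n x i s"] unfolding fsq_def .
    then have "exp (- (2 * \<omega> * s)) * (- (2 * \<omega>)) * fsq A n x s + exp (- (2 * \<omega> * s)) * (2 * quad A n (\<lambda>i. yv A n x i s)) \<le> 0"
      by (simp add: algebra_simps mult_left_mono)
    with d show "\<exists>y. (g has_real_derivative y) (at s) \<and> y \<le> 0" by blast
  qed
  then have "exp (- (2 * \<omega> * t)) * fsq A n x t \<le> (\<Sum>i<n. (x i)^2)"
    unfolding g_def using fsq_zero[OF A] by simp
  then have "exp (2 * \<omega> * t) * (exp (- (2 * \<omega> * t)) * fsq A n x t) \<le> exp (2 * \<omega> * t) * (\<Sum>i<n. (x i)^2)"
    by (intro mult_left_mono) auto
  then show ?thesis by (simp add: exp_minus field_simps)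
qed

lemma vnorm_bound: assumes A: "A \<in> carrier_mat n n"
  and Q: "\<And>x. quad A n x \<le> \<omega> * (\<Sum>i<n. (x i)^2)" and t: "t \<ge> 0"
  and x: "x \<in> carrier_vec n" "vnorm2 x = 1"
  shows "vnorm2 (mat_exp (t \<cdot>\<^sub>m A) *\<^sub>v x) \<le> exp (t * \<omega>)"
proof -
  have s1: "(\<Sum>i<n. (x $ i)^2) = 1" using x unfolding vnorm2_def by simp
  have "fsq A n (\<lambda>j. x $ j) t \<le> exp (2 * \<omega> * t)"
    using fsq_bound[OF A Q t, of "\<lambda>j. x $ j"] s1 by simp
  also have "exp (2 * \<omega> * t) = (exp (t * \<omega>))^2"
    by (simp add: power2_eq_square exp_add[symmetric] algebra_simps)
  finally have "sqrt (fsq A n (\<lambda>j. x $ j) t) \<le> sqrt ((exp (t * \<omega>))^2)" by (rule real_sqrt_le_mono)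
  then show ?thesis using mat_exp_mult_vec[OF A x(1)] by simp
qed

lemma spec_set_bdd: assumes A: "A \<in> carrier_mat n n"
  and Q: "\<And>x. quad A n x \<le> \<omega> * (\<Sum>i<n. (x i)^2)" and t: "t \<ge> 0"
  shows "bdd_above {vnorm2 (mat_exp (t \<cdot>\<^sub>m A) *\<^sub>v x) | x. x \<in> carrier_vec (dim_col (mat_exp (t \<cdot>\<^sub>m A))) \<and> vnorm2 x = 1}"
  using vnorm_bound[OF A Q t] mat_exp_carrier[OF A, of t]
  by (intro bdd_aboveI[where M="exp (t * \<omega>)"]) auto

lemma upper: assumes A: "A \<in> carrier_mat n n" and n: "0 < n"
  and Q: "\<And>x. quad A n x \<le> \<omega> * (\<Sum>i<n. (x i)^2)" and t: "t \<ge> 0"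
  shows "spec_norm (mat_exp (t \<cdot>\<^sub>m A)) \<le> exp (t * \<omega>)"
  unfolding spec_norm_def
proof (rule cSup_least)
  have dc: "dim_col (mat_exp (t \<cdot>\<^sub>m A)) = n" using mat_exp_carrier[OF A, of t] by simp
  have "vnorm2 (unit_vec n 0) = 1"
  proof -
    have "(\<Sum>i<n. (unit_vec n 0 $ i)^2) = (\<Sum>i<n. (if i = 0 then 1 else 0 :: real))"
      by (intro sum.cong refl) auto
    also have "\<dots> = 1" using n by (simp add: sum.delta)
    finally show ?thesis unfolding vnorm2_def by simp
  qed
  moreover have "unit_vec n 0 \<in> carrier_vec n" by simp
  ultimately show "{vnorm2 (mat_exp (t \<cdot>\<^sub>m A) *\<^sub>v x) | x. x \<in> carrier_vec (dim_col (mat_exp (t \<cdot>\<^sub>m A))) \<and> vnorm2 x = 1} \<noteq> {}"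
    unfolding dc by blast
next
  fix y assume "y \<in> {vnorm2 (mat_exp (t \<cdot>\<^sub>m A) *\<^sub>v x) | x. x \<in> carrier_vec (dim_col (mat_exp (t \<cdot>\<^sub>m A))) \<and> vnorm2 x = 1}"
  then show "y \<le> exp (t * \<omega>)"
    using vnorm_bound[OF A Q t] mat_exp_carrier[OF A, of t] by auto
qed

lemma lower: assumes A: "A \<in> carrier_mat n n"
  and Q: "\<And>x. quad A n x \<le> \<omega>0 * (\<Sum>i<n. (x i)^2)"
  and x: "x \<in> carrier_vec n" "(\<Sum>i<n. (x $ i)^2) = 1" and qx: "quad A n (\<lambda>i. x $ i) > \<omega>"
  shows "\<exists>t\<ge>0. \<not> spec_norm (mat_exp (t \<cdot>\<^sub>m A)) \<le> exp (t * \<omega>)"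
proof -
  define h where "h s = fsq A n (\<lambda>i. x $ i) s - exp (2 * \<omega> * s)" for s
  have d: "(h has_real_derivative (2 * quad A n (\<lambda>i. yv A n (\<lambda>i. x $ i) i 0) - exp (2 * \<omega> * 0) * (2 * \<omega>))) (at 0)"
    unfolding h_def[abs_def]
    by (intro DERIV_diff fsq_deriv[OF A]) (auto intro!: derivative_eq_intros)
  have "(\<lambda>i. yv A n (\<lambda>i. x $ i) i 0) = (\<lambda>i. if i < n then x $ i else yv A n (\<lambda>i. x $ i) i 0)"
    using yv_zero[OF A] by auto
  then have "quad A n (\<lambda>i. yv A n (\<lambda>i. x $ i) i 0) = quad A n (\<lambda>i. x $ i)"
    unfolding quad_def by (intro sum.cong refl) (simp add: yv_zero[OF A])
  with d have d': "(h has_real_derivative (2 * quad A n (\<lambda>i. x $ i) - 2 * \<omega>)) (at 0)" by simp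
  have "0 < 2 * quad A n (\<lambda>i. x $ i) - 2 * \<omega>" using qx by simp
  from DERIV_pos_inc_right[OF d' this] obtain d where dp: "d > 0" and hd: "\<And>e. e > 0 \<Longrightarrow> e < d \<Longrightarrow> h 0 < h (0 + e)"
    by blast
  define t where "t = d / 2"
  have t: "t > 0" "t < d" using dp unfolding t_def by auto
  have h0: "h 0 = 0" unfolding h_def using fsq_zero[OF A] x(2) by simp
  have "h t > 0" using hd[OF t] h0 by simp
  then have f: "fsq A n (\<lambda>i. x $ i) t > exp (2 * \<omega> * t)" unfolding h_def by simp
  have e2: "exp (2 * \<omega> * t) = (exp (t * \<omega>))^2"
    by (simp add: power2_eq_square exp_add[symmetric] algebra_simps)
  have vx: "vnorm2 x = 1" using x(1,2) unfolding vnorm2_def by simp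
  have "sqrt ((exp (t * \<omega>))^2) < sqrt (fsq A n (\<lambda>i. x $ i) t)" using f e2 by (simp only: real_sqrt_less_iff)
  then have gt: "exp (t * \<omega>) < vnorm2 (mat_exp (t \<cdot>\<^sub>m A) *\<^sub>v x)"
    using mat_exp_mult_vec[OF A x(1)] by simp
  have dc: "dim_col (mat_exp (t \<cdot>\<^sub>m A)) = n" using mat_exp_carrier[OF A, of t] by simp
  have "vnorm2 (mat_exp (t \<cdot>\<^sub>m A) *\<^sub>v x) \<le> spec_norm (mat_exp (t \<cdot>\<^sub>m A))"
    unfolding spec_norm_def
    by (rule cSup_upper) (use dc x(1) vx spec_set_bdd[OF A Q, of t] t in auto)
  with gt t show ?thesis by (intro exI[of _ t]) auto
qed



lemma sum_blocks: fixes k m :: nat shows "(\<Sum>p<k*m. f p) = (\<Sum>a<k. \<Sum>i<m. f (a*m+i))"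
proof -
  have "(\<Sum>p<k*m. f p) = (\<Sum>a<k. sum f {a*m..<a*m+m})" using sum.nat_group[of f m k] by simp
  also have "\<dots> = (\<Sum>a<k. \<Sum>i<m. f (a*m+i))"
  proof (rule sum.cong[OF refl])
    fix a assume "a \<in> {..<k}"
    show "sum f {a*m..<a*m+m} = (\<Sum>i<m. f (a*m+i))"
      using sum.shift_bounds_nat_ivl[of f 0 "a*m" m] by (simp add: atLeast0LessThan add.commute)
  qed
  finally show ?thesis .
qed

lemma quad_smult: "A \<in> carrier_mat n n \<Longrightarrow> quad (r \<cdot>\<^sub>m A) n x = r * quad A n x"
  unfolding quad_def by (simp add: sum_distrib_left mult_ac)

lemma kron_carrier: "A \<in> carrier_mat k k \<Longrightarrow> B \<in> carrier_mat m m \<Longrightarrow> kron A B \<in> carrier_mat (k*m) (k*m)"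
  unfolding kron_def carrier_mat_def by simp

lemma idx_bound: "a < k \<Longrightarrow> i < (m::nat) \<Longrightarrow> a*m+i < k*m"
proof -
  assume a: "a < k" and i: "i < m"
  have "a*m + i < (a+1)*m" using i by simp
  also have "(a+1)*m \<le> k*m" using a by (intro mult_le_mono1) simp
  finally show ?thesis .
qed

lemma kron_entry: assumes "A \<in> carrier_mat k k" "B \<in> carrier_mat m m" "a < k" "b < k" "i < m" "j < m"
  shows "kron A B $$ (a*m+i, b*m+j) = A $$ (a,b) * B $$ (i,j)"
  using assms idx_bound[of a k i m] idx_bound[of b k j m] unfolding kron_def by simp

lemma quad_blocks: fixes k m :: nat shows
  "quad K (k*m) x = (\<Sum>a<k. \<Sum>i<m. \<Sum>b<k. \<Sum>j<m. x (a*m+i) * K $$ (a*m+i, b*m+j) * x (b*m+j))"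
  unfolding quad_def sum_blocks ..

lemma sq_blocks: fixes k m :: nat shows "(\<Sum>p<k*m. (x p)^2) = (\<Sum>a<k. \<Sum>i<m. (x (a*m+i))^2)"
  by (rule sum_blocks)

lemma quad_kron_left: assumes B: "B \<in> carrier_mat m m"
  shows "quad (kron (1\<^sub>m k) B) (k*m) x = (\<Sum>a<k. quad B m (\<lambda>i. x (a*m+i)))"
proof -
  have "(\<Sum>b<k. \<Sum>j<m. x (a*m+i) * kron (1\<^sub>m k) B $$ (a*m+i, b*m+j) * x (b*m+j))
      = (\<Sum>j<m. x (a*m+i) * B $$ (i,j) * x (a*m+j))" if a: "a < k" and i: "i < m" for a i
  proof -
    have "(\<Sum>j<m. x (a*m+i) * kron (1\<^sub>m k) B $$ (a*m+i, b*m+j) * x (b*m+j))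
       = (if b = a then (\<Sum>j<m. x (a*m+i) * B $$ (i,j) * x (a*m+j)) else 0)" if b: "b < k" for b
      using a b i by (auto intro!: sum.cong simp: kron_entry[OF one_carrier_mat B])
    then have "(\<Sum>b<k. \<Sum>j<m. x (a*m+i) * kron (1\<^sub>m k) B $$ (a*m+i, b*m+j) * x (b*m+j))
      = (\<Sum>b<k. (if b = a then (\<Sum>j<m. x (a*m+i) * B $$ (i,j) * x (a*m+j)) else 0))"
      by (intro sum.cong refl) auto
    also have "\<dots> = (\<Sum>j<m. x (a*m+i) * B $$ (i,j) * x (a*m+j))" using a by (simp add: sum.delta)
    finally show ?thesis .
  qed
  then show ?thesis unfolding quad_blocks by (simp add: quad_def)
qed

lemma quad_kron_right: assumes C: "C \<in> carrier_mat k k"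
  shows "quad (kron C (1\<^sub>m m)) (k*m) x = (\<Sum>i<m. quad C k (\<lambda>a. x (a*m+i)))"
proof -
  have "(\<Sum>b<k. \<Sum>j<m. x (a*m+i) * kron C (1\<^sub>m m) $$ (a*m+i, b*m+j) * x (b*m+j))
      = (\<Sum>b<k. x (a*m+i) * C $$ (a,b) * x (b*m+i))" if a: "a < k" and i: "i < m" for a i
  proof (rule sum.cong[OF refl])
    fix b assume b: "b \<in> {..<k}"
    have "(\<Sum>j<m. x (a*m+i) * kron C (1\<^sub>m m) $$ (a*m+i, b*m+j) * x (b*m+j))
       = (\<Sum>j<m. if j = i then x (a*m+i) * C $$ (a,b) * x (b*m+j) else 0)"
      using a b i by (intro sum.cong refl) (auto simp: kron_entry[OF C one_carrier_mat])
    also have "\<dots> = x (a*m+i) * C $$ (a,b) * x (b*m+i)" using i by (simp add: sum.delta)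
    finally show "(\<Sum>j<m. x (a*m+i) * kron C (1\<^sub>m m) $$ (a*m+i, b*m+j) * x (b*m+j))
       = x (a*m+i) * C $$ (a,b) * x (b*m+i)" .
  qed
  note inner = this
  have "quad (kron C (1\<^sub>m m)) (k*m) x = (\<Sum>a<k. \<Sum>i<m. \<Sum>b<k. x (a*m+i) * C $$ (a,b) * x (b*m+i))"
    unfolding quad_blocks
  proof (rule sum.cong[OF refl])
    fix a assume a: "a \<in> {..<k}"
    show "(\<Sum>i<m. \<Sum>b<k. \<Sum>j<m. x (a*m+i) * kron C (1\<^sub>m m) $$ (a*m+i, b*m+j) * x (b*m+j))
        = (\<Sum>i<m. \<Sum>b<k. x (a*m+i) * C $$ (a,b) * x (b*m+i))"
      by (rule sum.cong[OF refl]) (use inner a in auto)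
  qed
  also have "\<dots> = (\<Sum>i<m. \<Sum>a<k. \<Sum>b<k. x (a*m+i) * C $$ (a,b) * x (b*m+i))"
    by (rule sum.swap)
  finally show ?thesis by (simp add: quad_def)
qed

definition tri :: "nat \<Rightarrow> (nat \<Rightarrow> real) \<Rightarrow> real mat" where
  "tri m c = mat m m (\<lambda>(i,j). c i * (if i = j + 1 then -1 else if i = j then 0 else if j = i + 1 then 1 else 0))"

lemma tri_carrier: "tri m c \<in> carrier_mat m m" unfolding tri_def by simp

lemma quad_tri: "quad (tri (Suc m') c) (Suc m') y = (\<Sum>i<m'. (c i - c (Suc i)) * y i * y (Suc i))"
proof -
  let ?M = "Suc m'"
  have T: "(\<Sum>j<?M. (if i = j + 1 then -1 else if i = j then 0 else if j = i + 1 then 1 else 0) * y j)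
     = (if i < m' then y (Suc i) else 0) - (if 0 < i then y (i - 1) else 0)" if i: "i < ?M" for i
  proof -
    have "(\<Sum>j<?M. (if i = j + 1 then -1 else if i = j then 0 else if j = i + 1 then 1 else 0) * y j)
       = (\<Sum>j<?M. (if j = Suc i then y j else 0)) - (\<Sum>j<?M. (if Suc j = i then y j else 0))"
      unfolding sum_subtractf[symmetric] by (intro sum.cong refl) auto
    also have "(\<Sum>j<?M. (if j = Suc i then y j else 0)) = (if i < m' then y (Suc i) else 0)"
      by (simp add: sum.delta')
    also have "(\<Sum>j<?M. (if Suc j = i then y j else 0)) = (if 0 < i then y (i - 1) else 0)"
    proof (cases i)
      case 0 then show ?thesis by simp
    next
      case (Suc i')
      have "(\<Sum>j<?M. (if Suc j = i then y j else 0)) = (\<Sum>j<?M. (if j = i' then y j else 0))"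
        using Suc by (intro sum.cong refl) auto
      also have "\<dots> = y i'" using Suc i by (simp add: sum.delta')
      finally show ?thesis using Suc by simp
    qed
    finally show ?thesis .
  qed
  have "quad (tri ?M c) ?M y = (\<Sum>i<?M. c i * y i * ((if i < m' then y (Suc i) else 0) - (if 0 < i then y (i - 1) else 0)))"
    unfolding quad_def
  proof (rule sum.cong[OF refl])
    fix i assume i: "i \<in> {..<?M}"
    have "(\<Sum>j<?M. y i * tri ?M c $$ (i, j) * y j)
        = c i * y i * (\<Sum>j<?M. (if i = j + 1 then -1 else if i = j then 0 else if j = i + 1 then 1 else 0) * y j)"
      unfolding sum_distrib_left using i by (intro sum.cong refl) (auto simp: tri_def)
    then show "(\<Sum>j<?M. y i * tri ?M c $$ (i, j) * y j) = c i * y i * ((if i < m' then y (Suc i) else 0) - (if 0 < i then y (i - 1) else 0))"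
      using T i by simp
  qed
  also have "\<dots> = (\<Sum>i<?M. (if i < m' then c i * y i * y (Suc i) else 0)) - (\<Sum>i<?M. (if 0 < i then c i * y i * y (i - 1) else 0))"
    unfolding sum_subtractf[symmetric] by (intro sum.cong refl) (auto simp: algebra_simps)
  also have "(\<Sum>i<?M. (if i < m' then c i * y i * y (Suc i) else 0)) = (\<Sum>i<m'. c i * y i * y (Suc i))"
    by simp
  also have "(\<Sum>i<?M. (if 0 < i then c i * y i * y (i - 1) else 0)) = (\<Sum>i<m'. c (Suc i) * y (Suc i) * y i)"
    by (subst sum.lessThan_Suc_shift) simp
  finally show ?thesis by (simp add: sum_subtractf[symmetric] algebra_simps)
qed

lemma chain_bound: fixes d :: real and y :: "nat \<Rightarrow> real" shows "(\<Sum>i<m'. d * y i * y (Suc i)) \<le> \<bar>d\<bar> * (\<Sum>i<Suc m'. (y i)^2)"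
proof -
  have t: "d * y i * y (Suc i) \<le> \<bar>d\<bar> * (((y i)^2 + (y (Suc i))^2) / 2)" for i
  proof -
    have "d * y i * y (Suc i) \<le> \<bar>d\<bar> * \<bar>y i * y (Suc i)\<bar>"
      by (metis abs_ge_self abs_mult mult.assoc)
    also have "\<bar>y i * y (Suc i)\<bar> \<le> ((y i)^2 + (y (Suc i))^2) / 2"
    proof -
      have "0 \<le> (\<bar>y i\<bar> - \<bar>y (Suc i)\<bar>)^2" by simp
      then show ?thesis by (simp add: power2_eq_square algebra_simps abs_mult)
    qed
    then have "\<bar>d\<bar> * \<bar>y i * y (Suc i)\<bar> \<le> \<bar>d\<bar> * (((y i)^2 + (y (Suc i))^2) / 2)"
      by (intro mult_left_mono) auto
    finally show ?thesis .
  qed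
  have "(\<Sum>i<m'. d * y i * y (Suc i)) \<le> (\<Sum>i<m'. \<bar>d\<bar> * (((y i)^2 + (y (Suc i))^2) / 2))"
    by (intro sum_mono t)
  also have "\<dots> = \<bar>d\<bar> * (((\<Sum>i<m'. (y i)^2) + (\<Sum>i<m'. (y (Suc i))^2)) / 2)"
    by (simp only: sum_distrib_left[symmetric] sum_divide_distrib[symmetric] sum.distrib)
  also have "\<dots> \<le> \<bar>d\<bar> * (\<Sum>i<Suc m'. (y i)^2)"
  proof -
    have a: "(\<Sum>i<m'. (y i)^2) \<le> (\<Sum>i<Suc m'. (y i)^2)" by simp
    have b: "(\<Sum>i<m'. (y (Suc i))^2) \<le> (\<Sum>i<Suc m'. (y i)^2)"
      by (subst sum.lessThan_Suc_shift) simp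
    from a b have "((\<Sum>i<m'. (y i)^2) + (\<Sum>i<m'. (y (Suc i))^2)) / 2 \<le> (\<Sum>i<Suc m'. (y i)^2)"
      using add_mono[OF a b] by simp
    then show ?thesis by (rule mult_left_mono) simp
  qed
  finally show ?thesis .
qed

lemma quad_cong: "(\<And>i. i < n \<Longrightarrow> x i = y i) \<Longrightarrow> quad A n x = quad A n y"
  unfolding quad_def by (intro sum.cong refl) auto

lemma tri_quad_bound: assumes c: "\<And>i. c i - c (Suc i) = d" and M: "0 < M"
  shows "quad (tri M c) M y \<le> \<bar>d\<bar> * (\<Sum>i<M. (y i)^2)"
proof -
  obtain m' where M': "M = Suc m'" using M by (cases M) auto
  show ?thesis unfolding M' quad_tri c by (rule chain_bound)
qed

lemma tri_quad_alt: assumes c: "\<And>i. c i - c (Suc i) = d" and M: "0 < M"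
  shows "quad (tri M c) M (\<lambda>i. \<alpha> * (-1)^i) = - d * \<alpha>^2 * real (M - 1)"
proof -
  obtain m' where M': "M = Suc m'" using M by (cases M) auto
  show ?thesis unfolding M' quad_tri c by (simp add: power2_eq_square algebra_simps)
qed

lemma tri_quad_const: assumes c: "\<And>i. c i - c (Suc i) = d" and M: "0 < M"
  shows "quad (tri M c) M (\<lambda>i. \<alpha>) = d * \<alpha>^2 * real (M - 1)"
proof -
  obtain m' where M': "M = Suc m'" using M by (cases M) auto
  show ?thesis unfolding M' quad_tri c by (simp add: power2_eq_square algebra_simps)
qed

lemma A1_eq: "A1_mat r L S m1 m2 = r \<cdot>\<^sub>m kron (1\<^sub>m m2)
   (tri m1 (\<lambda>i. (L + real (i + 1) * ((S - L) / real (m1 + 1))) / (2 * ((S - L) / real (m1 + 1)))))"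
proof -
  define ds where "ds = (S - L) / real (m1 + 1)"
  have L1c: "(1 / (2 * ds)) \<cdot>\<^sub>m tridiag m1 (-1) 0 1 \<in> carrier_mat m1 m1" by (simp add: tridiag_def)
  have "mat_diag m1 (\<lambda>i. L + real (i + 1) * ds) * ((1 / (2 * ds)) \<cdot>\<^sub>m tridiag m1 (-1) 0 1)
     = tri m1 (\<lambda>i. (L + real (i + 1) * ds) / (2 * ds))"
    unfolding mat_diag_mult_left[OF L1c] by (rule eq_matI) (auto simp: tri_def tridiag_def)
  then show ?thesis unfolding A1_mat_def Let_def ds_def by simp
qed

lemma A2_eq: "A2_mat \<kappa> \<eta> V m1 m2 = \<kappa> \<cdot>\<^sub>m kron
   (tri m2 (\<lambda>j. (\<eta> - real (j + 1) * (V / real (m2 + 1))) / (2 * (V / real (m2 + 1))))) (1\<^sub>m m1)"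
proof -
  define dv where "dv = V / real (m2 + 1)"
  have L2c: "(1 / (2 * dv)) \<cdot>\<^sub>m tridiag m2 (-1) 0 1 \<in> carrier_mat m2 m2" by (simp add: tridiag_def)
  have D: "\<eta> \<cdot>\<^sub>m 1\<^sub>m m2 - mat_diag m2 (\<lambda>j. real (j + 1) * dv) = mat_diag m2 (\<lambda>j. \<eta> - real (j + 1) * dv)"
    by (rule eq_matI) (auto simp: mat_diag_def)
  have "(\<eta> \<cdot>\<^sub>m 1\<^sub>m m2 - mat_diag m2 (\<lambda>j. real (j + 1) * dv)) * ((1 / (2 * dv)) \<cdot>\<^sub>m tridiag m2 (-1) 0 1)
     = tri m2 (\<lambda>j. (\<eta> - real (j + 1) * dv) / (2 * dv))"
    unfolding D mat_diag_mult_left[OF L2c] by (rule eq_matI) (auto simp: tri_def tridiag_def)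
  then show ?thesis unfolding A2_mat_def Let_def dv_def by simp
qed

lemma A1_carrier: "A1_mat r L S m1 m2 \<in> carrier_mat (m2*m1) (m2*m1)"
  unfolding A1_eq by (intro smult_carrier_mat kron_carrier one_carrier_mat tri_carrier)

lemma A2_carrier: "A2_mat \<kappa> \<eta> V m1 m2 \<in> carrier_mat (m2*m1) (m2*m1)"
  unfolding A2_eq by (intro smult_carrier_mat kron_carrier one_carrier_mat tri_carrier)

lemma A1_quad_expand: "quad (A1_mat r L S m1 m2) (m2*m1) x = r * (\<Sum>a<m2. quad
   (tri m1 (\<lambda>i. (L + real (i + 1) * ((S - L) / real (m1 + 1))) / (2 * ((S - L) / real (m1 + 1)))))
   m1 (\<lambda>i. x (a*m1+i)))"
  unfolding A1_eq by (simp add: quad_smult[OF kron_carrier[OF one_carrier_mat tri_carrier]] quad_kron_left[OF tri_carrier])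

lemma A2_quad_expand: "quad (A2_mat \<kappa> \<eta> V m1 m2) (m2*m1) x = \<kappa> * (\<Sum>i<m1. quad
   (tri m2 (\<lambda>j. (\<eta> - real (j + 1) * (V / real (m2 + 1))) / (2 * (V / real (m2 + 1)))))
   m2 (\<lambda>a. x (a*m1+i)))"
  unfolding A2_eq by (simp add: quad_smult[OF kron_carrier[OF tri_carrier one_carrier_mat]] quad_kron_right[OF tri_carrier])

lemma c1_diff: assumes "L < S"
  shows "(\<lambda>i. (L + real (i + 1) * ((S - L) / real (m1 + 1))) / (2 * ((S - L) / real (m1 + 1)))) i
       - (\<lambda>i. (L + real (i + 1) * ((S - L) / real (m1 + 1))) / (2 * ((S - L) / real (m1 + 1)))) (Suc i) = - 1/2"
proof -
  define ds where "ds = (S - L) / real (m1 + 1)"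
  have ds: "ds \<noteq> 0" using assms unfolding ds_def by simp
  have e: "L + real (Suc i + 1) * ds = (L + real (i + 1) * ds) + ds" by (simp add: algebra_simps)
  have h: "ds / (2 * ds) = 1/2" using ds by simp
  show ?thesis unfolding ds_def[symmetric] e add_divide_distrib using h by simp
qed

lemma c2_diff: assumes "0 < V"
  shows "(\<lambda>j. (\<eta> - real (j + 1) * (V / real (m2 + 1))) / (2 * (V / real (m2 + 1)))) i
       - (\<lambda>j. (\<eta> - real (j + 1) * (V / real (m2 + 1))) / (2 * (V / real (m2 + 1)))) (Suc i) = 1/2"
proof -
  define dv where "dv = V / real (m2 + 1)"
  have dv: "dv \<noteq> 0" using assms unfolding dv_def by simp
  have e: "\<eta> - real (Suc i + 1) * dv = (\<eta> - real (i + 1) * dv) - dv" by (simp add: algebra_simps)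
  have h: "dv / (2 * dv) = 1/2" using dv by simp
  show ?thesis unfolding dv_def[symmetric] e diff_divide_distrib using h by simp
qed

lemma A1_quad: assumes "0 < m1" "L < S" "0 \<le> r"
  shows "quad (A1_mat r L S m1 m2) (m2*m1) x \<le> r / 2 * (\<Sum>p<m2*m1. (x p)^2)"
proof -
  have "quad (A1_mat r L S m1 m2) (m2*m1) x \<le> r * (\<Sum>a<m2. \<bar>- 1/2\<bar> * (\<Sum>i<m1. (x (a*m1+i))^2))"
    unfolding A1_quad_expand
    by (intro mult_left_mono sum_mono tri_quad_bound c1_diff) (use assms in auto)
  also have "\<dots> = r / 2 * (\<Sum>p<m2*m1. (x p)^2)"
    by (simp add: sq_blocks sum_distrib_left)
  finally show ?thesis .
qed

lemma A2_quad: assumes "0 < m2" "0 < V" "0 \<le> \<kappa>"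
  shows "quad (A2_mat \<kappa> \<eta> V m1 m2) (m2*m1) x \<le> \<kappa> / 2 * (\<Sum>p<m2*m1. (x p)^2)"
proof -
  have "quad (A2_mat \<kappa> \<eta> V m1 m2) (m2*m1) x \<le> \<kappa> * (\<Sum>i<m1. \<bar>1/2\<bar> * (\<Sum>a<m2. (x (a*m1+i))^2))"
    unfolding A2_quad_expand
    by (intro mult_left_mono sum_mono tri_quad_bound c2_diff) (use assms in auto)
  also have "\<dots> = \<kappa> / 2 * (\<Sum>p<m2*m1. (x p)^2)"
    by (simp add: sq_blocks sum_distrib_left sum.swap[of _ "{..<m1}"])
  finally show ?thesis .
qed

lemma A1_test: assumes "0 < m1" "L < S"
  shows "quad (A1_mat r L S m1 m2) (m2*m1) (\<lambda>p. \<alpha> * (-1)^(p mod m1)) = r * real m2 * (1/2 * \<alpha>^2 * real (m1 - 1))"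
proof -
  have "quad (A1_mat r L S m1 m2) (m2*m1) (\<lambda>p. \<alpha> * (-1)^(p mod m1)) = r * (\<Sum>a<m2. 
     quad (tri m1 (\<lambda>i. (L + real (i + 1) * ((S - L) / real (m1 + 1))) / (2 * ((S - L) / real (m1 + 1)))))
     m1 (\<lambda>i. \<alpha> * (-1)^i))"
    unfolding A1_quad_expand by (intro arg_cong[where f="\<lambda>u. r * u"] sum.cong refl quad_cong) auto
  also have "\<dots> = r * (\<Sum>a<m2. 1/2 * \<alpha>^2 * real (m1 - 1))"
  proof -
    have c: "\<And>i. (\<lambda>i. (L + real (i + 1) * ((S - L) / real (m1 + 1))) / (2 * ((S - L) / real (m1 + 1)))) i
       - (\<lambda>i. (L + real (i + 1) * ((S - L) / real (m1 + 1))) / (2 * ((S - L) / real (m1 + 1)))) (Suc i) = - 1/2"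
      by (rule c1_diff[OF assms(2)])
    show ?thesis by (subst tri_quad_alt[where c="\<lambda>i. (L + real (i + 1) * ((S - L) / real (m1 + 1))) / (2 * ((S - L) / real (m1 + 1)))" and d="-1/2", OF c]) (use assms in simp_all)
  qed
  finally show ?thesis by simp
qed

lemma A2_test: assumes "0 < m2" "0 < V"
  shows "quad (A2_mat \<kappa> \<eta> V m1 m2) (m2*m1) (\<lambda>p. \<alpha>) = \<kappa> * real m1 * (1/2 * \<alpha>^2 * real (m2 - 1))"
proof -
  have "quad (A2_mat \<kappa> \<eta> V m1 m2) (m2*m1) (\<lambda>p. \<alpha>) = \<kappa> * (\<Sum>i<m1. 1/2 * \<alpha>^2 * real (m2 - 1))"
  proof -
    have c: "\<And>i. (\<lambda>j. (\<eta> - real (j + 1) * (V / real (m2 + 1))) / (2 * (V / real (m2 + 1)))) i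
       - (\<lambda>j. (\<eta> - real (j + 1) * (V / real (m2 + 1))) / (2 * (V / real (m2 + 1)))) (Suc i) = 1/2"
      by (rule c2_diff[OF assms(2)])
    show ?thesis unfolding A2_quad_expand by (subst tri_quad_const[where c="\<lambda>j. (\<eta> - real (j + 1) * (V / real (m2 + 1))) / (2 * (V / real (m2 + 1)))" and d="1/2", OF c]) (use assms in simp_all)
  qed
  then show ?thesis by simp
qed



lemma part1: assumes "r > 0" "L < S" "m1 \<ge> 3" "m2 \<ge> 3" "t \<ge> 0"
  shows "spec_norm (mat_exp (t \<cdot>\<^sub>m A1_mat r L S m1 m2)) \<le> exp (t * r / 2)"
proof -
  have C: "A1_mat r L S m1 m2 \<in> carrier_mat (m2*m1) (m2*m1)" by (rule A1_carrier)
  have Q: "\<And>x. quad (A1_mat r L S m1 m2) (m2*m1) x \<le> r / 2 * (\<Sum>p<m2*m1. (x p)^2)"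
    by (rule A1_quad) (use assms in auto)
  have "spec_norm (mat_exp (t \<cdot>\<^sub>m A1_mat r L S m1 m2)) \<le> exp (t * (r / 2))"
    by (rule upper[OF C _ Q assms(5)]) (use assms in simp)
  then show ?thesis by simp
qed

lemma part2: assumes "\<kappa> > 0" "V > 0" "m1 \<ge> 3" "m2 \<ge> 3" "t \<ge> 0"
  shows "spec_norm (mat_exp (t \<cdot>\<^sub>m A2_mat \<kappa> \<eta> V m1 m2)) \<le> exp (t * \<kappa> / 2)"
proof -
  have C: "A2_mat \<kappa> \<eta> V m1 m2 \<in> carrier_mat (m2*m1) (m2*m1)" by (rule A2_carrier)
  have Q: "\<And>x. quad (A2_mat \<kappa> \<eta> V m1 m2) (m2*m1) x \<le> \<kappa> / 2 * (\<Sum>p<m2*m1. (x p)^2)"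
    by (rule A2_quad) (use assms in auto)
  have "spec_norm (mat_exp (t \<cdot>\<^sub>m A2_mat \<kappa> \<eta> V m1 m2)) \<le> exp (t * (\<kappa> / 2))"
    by (rule upper[OF C _ Q assms(5)]) (use assms in simp)
  then show ?thesis by simp
qed

lemma big_nat: assumes "c > 0" "\<omega> < c / 2"
  shows "\<exists>m::nat. m \<ge> 3 \<and> c * (real m - 1) / (2 * real m) > \<omega>"
proof -
  define q where "q = c / (c - 2 * \<omega>)"
  define m where "m = nat \<lceil>q\<rceil> + 3"
  have pos: "c - 2 * \<omega> > 0" using assms by simp
  have "q \<le> real (nat \<lceil>q\<rceil>)" by (rule real_nat_ceiling_ge)
  then have mq: "real m > q" unfolding m_def by simp
  then have "real m * (c - 2 * \<omega>) > c" unfolding q_def using pos by (simp add: pos_divide_less_eq)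
  moreover have "real m > 0" unfolding m_def by simp
  ultimately have "c * (real m - 1) / (2 * real m) > \<omega>" by (simp add: field_simps)
  then show ?thesis unfolding m_def by (intro exI[of _ "nat \<lceil>q\<rceil> + 3"]) auto
qed

lemma part3: assumes "r > 0" "L < S" "\<omega> < r / 2"
  shows "\<exists>m1 m2 (t::real). m1 \<ge> 3 \<and> m2 \<ge> 3 \<and> t \<ge> 0 \<and>
            \<not> spec_norm (mat_exp (t \<cdot>\<^sub>m A1_mat r L S m1 m2)) \<le> exp (t * \<omega>)"
proof -
  obtain m1 :: nat where m1: "m1 \<ge> 3" and gt: "r * (real m1 - 1) / (2 * real m1) > \<omega>"
    using big_nat[OF assms(1,3)] by blast
  define n where "n = 3 * m1"
  define \<alpha> where "\<alpha> = 1 / sqrt (real n)"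
  define x where "x = vec n (\<lambda>p. \<alpha> * (-1)^(p mod m1))"
  have npos: "real n > 0" unfolding n_def using m1 by simp
  have a2: "\<alpha>^2 = 1 / real n" unfolding \<alpha>_def using npos by (simp add: power_divide)
  have xc: "x \<in> carrier_vec n" unfolding x_def by simp
  have "(\<Sum>i<n. (x $ i)^2) = (\<Sum>i<n. \<alpha>^2)"
  proof (rule sum.cong[OF refl])
    fix i assume "i \<in> {..<n}"
    have "((-1::real)^(i mod m1))^2 = 1" by (cases "even (i mod m1)") simp_all
    then show "(x $ i)^2 = \<alpha>^2" using \<open>i \<in> {..<n}\<close> unfolding x_def by (simp add: power_mult_distrib)
  qed
  also have "\<dots> = 1" using a2 npos by simp
  finally have sq: "(\<Sum>i<n. (x $ i)^2) = 1" .
  have "quad (A1_mat r L S m1 3) n (\<lambda>i. x $ i) = quad (A1_mat r L S m1 3) (3*m1) (\<lambda>p. \<alpha> * (-1)^(p mod m1))"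
    unfolding n_def x_def by (intro quad_cong) simp
  also have "\<dots> = r * 3 * (1/2 * \<alpha>^2 * real (m1 - 1))" using A1_test[of m1 L S r 3 \<alpha>] m1 assms by simp
  also have "\<dots> = r * (real m1 - 1) / (2 * real m1)" using a2 m1 unfolding n_def by (simp add: of_nat_diff field_simps)
  finally have q: "quad (A1_mat r L S m1 3) n (\<lambda>i. x $ i) > \<omega>" using gt by simp
  have Q: "\<And>y. quad (A1_mat r L S m1 3) n y \<le> r / 2 * (\<Sum>i<n. (y i)^2)"
    unfolding n_def by (rule A1_quad) (use m1 assms in auto)
  have C: "A1_mat r L S m1 3 \<in> carrier_mat n n" unfolding n_def by (rule A1_carrier)
  from lower[OF C Q xc sq q] obtain t where "t \<ge> 0" "\<not> spec_norm (mat_exp (t \<cdot>\<^sub>m A1_mat r L S m1 3)) \<le> exp (t * \<omega>)"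
    by blast
  then show ?thesis using m1 by (intro exI[of _ m1] exI[of _ "3::nat"] exI[of _ t]) auto
qed

lemma part4: assumes "\<kappa> > 0" "V > 0" "\<omega> < \<kappa> / 2"
  shows "\<exists>m1 m2 (t::real). m1 \<ge> 3 \<and> m2 \<ge> 3 \<and> t \<ge> 0 \<and>
            \<not> spec_norm (mat_exp (t \<cdot>\<^sub>m A2_mat \<kappa> \<eta> V m1 m2)) \<le> exp (t * \<omega>)"
proof -
  obtain m2 :: nat where m2: "m2 \<ge> 3" and gt: "\<kappa> * (real m2 - 1) / (2 * real m2) > \<omega>"
    using big_nat[OF assms(1,3)] by blast
  define n where "n = m2 * 3"
  define \<alpha> where "\<alpha> = 1 / sqrt (real n)"
  define x where "x = vec n (\<lambda>p. \<alpha>)"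
  have npos: "real n > 0" unfolding n_def using m2 by simp
  have a2: "\<alpha>^2 = 1 / real n" unfolding \<alpha>_def using npos by (simp add: power_divide)
  have xc: "x \<in> carrier_vec n" unfolding x_def by simp
  have "(\<Sum>i<n. (x $ i)^2) = (\<Sum>i<n. \<alpha>^2)"
    unfolding x_def by (intro sum.cong refl) simp
  also have "\<dots> = 1" using a2 npos by simp
  finally have sq: "(\<Sum>i<n. (x $ i)^2) = 1" .
  have "quad (A2_mat \<kappa> \<eta> V 3 m2) n (\<lambda>i. x $ i) = quad (A2_mat \<kappa> \<eta> V 3 m2) (m2*3) (\<lambda>p. \<alpha>)"
    unfolding n_def x_def by (intro quad_cong) simp
  also have "\<dots> = \<kappa> * 3 * (1/2 * \<alpha>^2 * real (m2 - 1))" using A2_test[of m2 V \<kappa> \<eta> 3 \<alpha>] m2 assms by simp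
  also have "\<dots> = \<kappa> * (real m2 - 1) / (2 * real m2)" using a2 m2 unfolding n_def by (simp add: of_nat_diff field_simps)
  finally have q: "quad (A2_mat \<kappa> \<eta> V 3 m2) n (\<lambda>i. x $ i) > \<omega>" using gt by simp
  have Q: "\<And>y. quad (A2_mat \<kappa> \<eta> V 3 m2) n y \<le> \<kappa> / 2 * (\<Sum>i<n. (y i)^2)"
    unfolding n_def by (rule A2_quad) (use m2 assms in auto)
  have C: "A2_mat \<kappa> \<eta> V 3 m2 \<in> carrier_mat n n" unfolding n_def by (rule A2_carrier)
  from lower[OF C Q xc sq q] obtain t where "t \<ge> 0" "\<not> spec_norm (mat_exp (t \<cdot>\<^sub>m A2_mat \<kappa> \<eta> V 3 m2)) \<le> exp (t * \<omega>)"
    by blast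
  then show ?thesis using m2 by (intro exI[of _ "3::nat"] exI[of _ m2] exI[of _ t]) auto
qed

theorem theorem2p1:
  fixes r \<kappa> \<eta> L S V :: real
  assumes "r > 0" "\<kappa> > 0" "\<eta> > 0" "L \<ge> 0" "S > L" "V > 0"
  shows "(\<forall>m1 m2 (t::real). m1 \<ge> 3 \<and> m2 \<ge> 3 \<and> t \<ge> 0 \<longrightarrow>
            spec_norm (mat_exp (t \<cdot>\<^sub>m A1_mat r L S m1 m2)) \<le> exp (t * r / 2)) \<and>
         (\<forall>m1 m2 (t::real). m1 \<ge> 3 \<and> m2 \<ge> 3 \<and> t \<ge> 0 \<longrightarrow>
            spec_norm (mat_exp (t \<cdot>\<^sub>m A2_mat \<kappa> \<eta> V m1 m2)) \<le> exp (t * \<kappa> / 2)) \<and>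
         (\<forall>\<omega>::real. \<omega> < r / 2 \<longrightarrow> (\<exists>m1 m2 (t::real). m1 \<ge> 3 \<and> m2 \<ge> 3 \<and> t \<ge> 0 \<and>
            \<not> spec_norm (mat_exp (t \<cdot>\<^sub>m A1_mat r L S m1 m2)) \<le> exp (t * \<omega>))) \<and>
         (\<forall>\<omega>::real. \<omega> < \<kappa> / 2 \<longrightarrow> (\<exists>m1 m2 (t::real). m1 \<ge> 3 \<and> m2 \<ge> 3 \<and> t \<ge> 0 \<and>
            \<not> spec_norm (mat_exp (t \<cdot>\<^sub>m A2_mat \<kappa> \<eta> V m1 m2)) \<le> exp (t * \<omega>)))"
  using part1[OF assms(1,5)] part2[OF assms(2,6)] part3[OF assms(1,5)] part4[OF assms(2,6)] by blast

end
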